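(* Let $q\in\mathbb C$ with $|q-1|>1$, let $\rho=1/|1-q|$, and let $\mathcal C_q=\{v/(q+v): v\in[-1,0]\}$. Then a complex number $t$ has the property that, for every $s\in D(\rho)$, $1+(q-1)ts\neq0$ and $t\|_q s\in D(\rho)$, if and only if $t\in\mathcal C_q$. In particular $\{t\|_q s: t\in\mathcal C_q, s\in D(\rho)\}\subseteq D(\rho)$, and $\mathcal C_q$ is the largest subset of $\mathbb C$ with this property.
   Context: $D(r)=\{t\in\mathbb C:|t|\le r\}$. For $t,s\in\mathbb C$ with $1+(q-1)ts\neq0$, $t\|_q s=\dfrac{t+s+(q-2)ts}{1+(q-1)ts}$ (the parallel connection of transmissivities). Note $q+v\ne0$ for $v\in[-1,0]$ since $|q-1|>1$. *)

theory Defs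
  imports Complex_Main
begin

definition disc :: "real \<Rightarrow> complex set" where
  "disc r = {t. cmod t \<le> r}"

text \<open>Parallel connection of transmissivities (only meaningful when the denominator is nonzero).\<close>
definition par :: "complex \<Rightarrow> complex \<Rightarrow> complex \<Rightarrow> complex" where
  "par q t s = (t + s + (q - 2) * t * s) / (1 + (q - 1) * t * s)"

definition Cq :: "complex \<Rightarrow> complex set" where
  "Cq q = {complex_of_real v / (q + complex_of_real v) | v. v \<in> {-1..0}}"

end

theory Submission
  imports Defs
begin

lemma id_fwd:
  fixes a b c d u :: real
  defines "p \<equiv> Complex a b" and "S \<equiv> Complex c d"
  shows "(cmod ((of_real u - 1) * S + (p + of_real u)))^2 - (cmod ((1 + p * of_real u) * S + p * (of_real u - 1)))^2
    = u * (2*(a + (a^2+b^2)) - u*((a^2+b^2)-1) - (c^2+d^2)*(u*((a^2+b^2)-1) + 2*(1+a)) + 2*(1-u)*((a^2+b^2)-1)*c)"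
  unfolding p_def S_def cmod_power2
  by (simp add: power2_eq_square algebra_simps)

lemma id_conv:
  fixes a b c d x y :: real
  defines "p \<equiv> Complex a b" and "S \<equiv> Complex c d" and "u \<equiv> Complex x y"
  assumes "c^2 + d^2 = 1"
  shows "(cmod ((u - 1) * S + (p + u)))^2 - (cmod ((1 + p * u) * S + p * (u - 1)))^2
    = 2*((1+c)*(x*((a^2+b^2)-1) + 2*y*b + (1-(a^2+b^2))*(x^2+y^2)) - d*(y*((1+a)^2+b^2)))"
proof -
  have h: "d*d = 1 - c*c" using assms(4) by (simp add: power2_eq_square)
  show ?thesis unfolding p_def S_def u_def cmod_power2
    apply (simp add: power2_eq_square)
    using h by algebra
qed

lemma fwd_ineq:
  fixes p S :: complex and u :: real
  assumes p: "cmod p > 1" and u: "0 \<le> u" "u \<le> 1" and S: "cmod S \<le> 1"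
  shows "(of_real u - 1) * S + (p + of_real u) \<noteq> 0"
    and "cmod ((1 + p * of_real u) * S + p * (of_real u - 1)) \<le> cmod ((of_real u - 1) * S + (p + of_real u))"
proof -
  have "cmod (of_real u - 1 :: complex) = 1 - u"
  proof -
    have "(of_real u - 1 :: complex) = of_real (u-1)" by simp
    then show ?thesis using u by (simp only: norm_of_real)
  qed
  then have "cmod ((of_real u - 1) * S) = (1-u) * cmod S" by (simp add: norm_mult)
  also have "\<dots> \<le> 1 - u" using u S by (simp add: mult_left_le)
  finally have h1: "cmod ((of_real u - 1) * S) \<le> 1 - u" .
  have h2: "cmod (p + of_real u) \<ge> cmod p - u"
    using norm_triangle_sub[of p "p + of_real u"] u by simp
  have "cmod ((of_real u - 1) * S + (p + of_real u)) \<ge> cmod (p + of_real u) - cmod ((of_real u - 1) * S)"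
    using norm_diff_ineq[of "p + of_real u" "(of_real u - 1) * S"] by (simp only: add.commute)
  with h1 h2 p have "cmod ((of_real u - 1) * S + (p + of_real u)) > 0" by linarith
  then show "(of_real u - 1) * S + (p + of_real u) \<noteq> 0" by auto
  obtain a b where pa: "p = Complex a b" by (cases p)
  obtain c d where Sc: "S = Complex c d" by (cases S)
  define m where "m = a^2 + b^2"
  define \<sigma> where "\<sigma> = cmod S"
  have m1: "m > 1" using p unfolding m_def pa cmod_def by (simp add: real_sqrt_gt_1_iff)
  have sig2: "\<sigma>^2 = c^2 + d^2" unfolding \<sigma>_def Sc cmod_power2 by simp
  have sig: "0 \<le> \<sigma>" "\<sigma> \<le> 1" using S unfolding \<sigma>_def by auto
  have cs: "c \<ge> - \<sigma>" using abs_Re_le_cmod[of S] unfolding \<sigma>_def Sc by simp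
  define K where "K = (1-u)*(m-1)"
  have K0: "K \<ge> 0" unfolding K_def using u m1 by simp
  have t1: "K*(\<sigma> + c) \<ge> 0" using K0 cs by simp
  have t2: "K*(1-\<sigma>)^2 \<ge> 0" using K0 by simp
  have t3: "(1-\<sigma>^2)*((1+a)^2+b^2) \<ge> 0"
  proof -
    have "\<sigma>^2 \<le> 1" using sig by (simp add: power_le_one)
    then show ?thesis by simp
  qed
  define B where "B = (2*(a + (a^2+b^2)) - u*((a^2+b^2)-1) - (c^2+d^2)*(u*((a^2+b^2)-1) + 2*(1+a)) + 2*(1-u)*((a^2+b^2)-1)*c)"
  have "B = (1-\<sigma>^2)*((1+a)^2+b^2) + K*(1-\<sigma>)^2 + 2*K*(\<sigma>+c)"
    unfolding B_def K_def m_def sig2[symmetric] by (simp add: power2_eq_square algebra_simps)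
  with t1 t2 t3 have B0: "B \<ge> 0" by simp
  have "(cmod ((of_real u - 1) * S + (p + of_real u)))^2 - (cmod ((1 + p * of_real u) * S + p * (of_real u - 1)))^2 = u * B"
    unfolding B_def pa Sc by (rule id_fwd)
  moreover have "u * B \<ge> 0" using u B0 by simp
  ultimately have "(cmod ((1 + p * of_real u) * S + p * (of_real u - 1)))^2 \<le> (cmod ((of_real u - 1) * S + (p + of_real u)))^2"
    by linarith
  then show "cmod ((1 + p * of_real u) * S + p * (of_real u - 1)) \<le> cmod ((of_real u - 1) * S + (p + of_real u))"
    by (rule power2_le_imp_le) simp
qed

lemma conv_ineq:
  fixes p u :: complex
  assumes p: "cmod p > 1"
    and H: "\<And>S. cmod S \<le> 1 \<Longrightarrow> cmod ((1 + p * u) * S + p * (u - 1)) \<le> cmod ((u - 1) * S + (p + u))"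
  shows "Im u = 0 \<and> 0 \<le> Re u \<and> Re u \<le> 1"
proof -
  obtain a b where pa: "p = Complex a b" by (cases p)
  obtain x y where ux: "u = Complex x y" by (cases u)
  define m where "m = a^2 + b^2"
  have m1: "m > 1" using p unfolding m_def pa cmod_def by (simp add: real_sqrt_gt_1_iff)
  define R where "R = x*(m-1) + 2*y*b + (1-m)*(x^2+y^2)"
  define I where "I = y*((1+a)^2+b^2)"
  have diff: "0 \<le> 2*((1+c)*R - d*I)" if "c^2+d^2 = 1" for c d
  proof -
    have "cmod (Complex c d) = 1" using that by (simp add: cmod_def)
    then have "cmod ((1 + p * u) * Complex c d + p * (u - 1)) \<le> cmod ((u - 1) * Complex c d + (p + u))"
      using H by simp
    then have "0 \<le> (cmod ((u - 1) * Complex c d + (p + u)))^2 - (cmod ((1 + p * u) * Complex c d + p * (u - 1)))^2"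
      by (simp add: power_mono)
    also have "\<dots> = 2*((1+c)*R - d*I)"
      unfolding pa ux R_def I_def m_def by (rule id_conv[OF that])
    finally show ?thesis .
  qed
  have y0: "y = 0"
  proof (rule ccontr)
    assume y: "y \<noteq> 0"
    have q0: "(1+a)^2+b^2 > 0"
    proof -
      have "\<not> (1+a = 0 \<and> b = 0)"
      proof
        assume "1+a = 0 \<and> b = 0"
        then have "a = -1" "b = 0" by auto
        with m1 show False unfolding m_def by simp
      qed
      then show ?thesis by (auto simp: sum_power2_gt_zero_iff)
    qed
    then have I0: "I \<noteq> 0" unfolding I_def using y by (metis mult_eq_0_iff less_irrefl)
    define k where "k = (\<bar>R\<bar> + 1) / I"
    define c where "c = (1 - k^2)/(1+k^2)"
    define d where "d = 2*k/(1+k^2)"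
    have kp: "1 + k^2 > 0" by (simp add: add_pos_nonneg)
    have e: "(1-k^2)^2 + (2*k)^2 = (1+k^2)^2" by (simp add: power2_eq_square algebra_simps)
    have "c^2+d^2 = ((1-k^2)^2 + (2*k)^2)/(1+k^2)^2" unfolding c_def d_def by (simp add: power_divide add_divide_distrib)
    also have "\<dots> = 1" unfolding e using kp by simp
    finally have cd: "c^2 + d^2 = 1" .
    have c1: "1 + c = 2/(1+k^2)" unfolding c_def using kp by (simp add: field_simps)
    have dd: "d = k*(1+c)" unfolding d_def c1 by simp
    have kI: "k*I = \<bar>R\<bar> + 1" unfolding k_def using I0 by simp
    have "2*((1+c)*R - d*I) = 2*(1+c)*(R - k*I)" unfolding dd by (simp add: algebra_simps)
    also have "\<dots> = 2*(1+c)*(R - \<bar>R\<bar> - 1)" using kI by simp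
    also have "\<dots> < 0"
    proof -
      have "1 + c > 0" unfolding c1 using kp by simp
      moreover have "R - \<bar>R\<bar> - 1 < 0" by simp
      ultimately show ?thesis by (simp add: mult_pos_neg)
    qed
    finally show False using diff[OF cd] by simp
  qed
  have "0 \<le> 2*((1+1)*R - 0*I)" using diff[of 1 0] by simp
  then have "0 \<le> (m-1) * (x*(1-x))" unfolding R_def y0 by (simp add: algebra_simps power2_eq_square)
  then have "0 \<le> x*(1-x)" using m1 by (simp add: zero_le_mult_iff)
  then have "0 \<le> x \<and> x \<le> 1" by (auto simp: zero_le_mult_iff)
  then show ?thesis using ux y0 by simp
qed

lemma ids:
  fixes q t s v U :: complex
  assumes "q + v \<noteq> 0" "t = v/(q+v)" "U = v + 1"
  shows "(q+v)*(1+(q-1)*t*s) = (U-1)*((q-1)*s) + ((q-1) + U)"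
    and "(q-1)*(q+v)*(t+s+(q-2)*t*s) = (1+(q-1)*U)*((q-1)*s) + (q-1)*(U-1)"
proof -
  have tv: "(q+v)*t = v" using assms(1,2) by simp
  have "(q+v)*(1+(q-1)*t*s) = (q+v) + (q-1)*((q+v)*t)*s" by (simp add: algebra_simps)
  also have "\<dots> = (U-1)*((q-1)*s) + ((q-1) + U)" unfolding tv assms(3) by (simp add: algebra_simps)
  finally show "(q+v)*(1+(q-1)*t*s) = (U-1)*((q-1)*s) + ((q-1) + U)" .
  have "(q-1)*(q+v)*(t+s+(q-2)*t*s) = (q-1)*(((q+v)*t) + (q+v)*s + (q-2)*((q+v)*t)*s)" by (simp add: algebra_simps)
  also have "\<dots> = (1+(q-1)*U)*((q-1)*s) + (q-1)*(U-1)" unfolding tv assms(3) by (simp add: algebra_simps)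
  finally show "(q-1)*(q+v)*(t+s+(q-2)*t*s) = (1+(q-1)*U)*((q-1)*s) + (q-1)*(U-1)" .
qed

lemma par_bound:
  fixes q t s v U :: complex
  assumes "q + v \<noteq> 0" "t = v/(q+v)" "U = v + 1" "q - 1 \<noteq> 0"
    and D0: "(U-1)*((q-1)*s) + ((q-1) + U) \<noteq> 0"
    and le: "cmod ((1+(q-1)*U)*((q-1)*s) + (q-1)*(U-1)) \<le> cmod ((U-1)*((q-1)*s) + ((q-1) + U))"
  shows "1 + (q-1)*t*s \<noteq> 0 \<and> cmod (par q t s) \<le> 1 / cmod (q-1)"
proof -
  note e = ids[OF assms(1-3), of s]
  define N where "N = (1+(q-1)*U)*((q-1)*s) + (q-1)*(U-1)"
  define D where "D = (U-1)*((q-1)*s) + ((q-1) + U)"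
  have den: "1 + (q-1)*t*s \<noteq> 0" using e(1) D0 by auto
  have "par q t s = ((q-1)*(q+v)*(t+s+(q-2)*t*s)) / ((q-1)*((q+v)*(1+(q-1)*t*s)))"
    unfolding par_def using assms(1,4) by simp
  also have "\<dots> = N / ((q-1)*D)" unfolding N_def D_def e(1) e(2) ..
  finally have "par q t s = N / ((q-1)*D)" .
  then have "cmod (par q t s) = cmod N / (cmod (q-1) * cmod D)" by (simp add: norm_divide norm_mult)
  also have "\<dots> \<le> cmod D / (cmod (q-1) * cmod D)"
    using le unfolding N_def[symmetric] D_def[symmetric] by (intro divide_right_mono) auto
  also have "\<dots> = 1 / cmod (q-1)" using D0 unfolding D_def[symmetric] by simp
  finally show ?thesis using den by simp
qed

lemma par_bound_conv:
  fixes q t s v U :: complex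
  assumes "q + v \<noteq> 0" "t = v/(q+v)" "U = v + 1" "q - 1 \<noteq> 0"
    and den: "1 + (q-1)*t*s \<noteq> 0" and le: "cmod (par q t s) \<le> 1 / cmod (q-1)"
  shows "cmod ((1+(q-1)*U)*((q-1)*s) + (q-1)*(U-1)) \<le> cmod ((U-1)*((q-1)*s) + ((q-1) + U))"
proof -
  note e = ids[OF assms(1-3), of s]
  have "cmod ((1+(q-1)*U)*((q-1)*s) + (q-1)*(U-1)) = cmod (q-1) * cmod (q+v) * cmod (t+s+(q-2)*t*s)"
    unfolding e(2)[symmetric] by (simp add: norm_mult)
  also have "cmod (t+s+(q-2)*t*s) = cmod (par q t s) * cmod (1+(q-1)*t*s)"
    unfolding par_def using den by (simp add: norm_divide)
  also have "cmod (q-1) * cmod (q+v) * (cmod (par q t s) * cmod (1+(q-1)*t*s))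
     \<le> cmod (q-1) * cmod (q+v) * ((1 / cmod (q-1)) * cmod (1+(q-1)*t*s))"
    using le by (intro mult_left_mono mult_right_mono) auto
  also have "\<dots> = cmod ((q+v)*(1+(q-1)*t*s))" using assms(4) by (simp add: norm_mult)
  also have "\<dots> = cmod ((U-1)*((q-1)*s) + ((q-1) + U))" unfolding e(1) ..
  finally show ?thesis .
qed

theorem lemma7p3:
  fixes q :: complex
  assumes "cmod (q - 1) > 1"
  defines "\<rho> \<equiv> 1 / cmod (1 - q)"
  shows "(\<forall>t. (\<forall>s\<in>disc \<rho>. 1 + (q - 1) * t * s \<noteq> 0 \<and> par q t s \<in> disc \<rho>) \<longleftrightarrow> t \<in> Cq q)
         \<and> {par q t s | t s. t \<in> Cq q \<and> s \<in> disc \<rho>} \<subseteq> disc \<rho>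
         \<and> (\<forall>S. (\<forall>t\<in>S. \<forall>s\<in>disc \<rho>. 1 + (q - 1) * t * s \<noteq> 0 \<and> par q t s \<in> disc \<rho>)
                 \<longrightarrow> S \<subseteq> Cq q)"
proof -
  define p where "p = q - 1"
  have pgt: "cmod p > 1" using assms(1) p_def by simp
  have rho: "\<rho> = 1 / cmod p" unfolding \<rho>_def p_def by (simp add: norm_minus_commute)
  have p0: "p \<noteq> 0" using pgt by auto
  have q0: "q \<noteq> 0" using assms(1) by auto
  have fwd: "\<forall>s\<in>disc \<rho>. 1 + (q - 1) * t * s \<noteq> 0 \<and> par q t s \<in> disc \<rho>" if "t \<in> Cq q" for t
  proof -
    from that obtain v where v: "-1 \<le> v" "v \<le> 0" and t: "t = of_real v / (q + of_real v)"
      unfolding Cq_def by auto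
    define u where "u = v + 1"
    have u01: "0 \<le> u" "u \<le> 1" using v unfolding u_def by auto
    have Ue: "(of_real u :: complex) = of_real v + 1" unfolding u_def by simp
    have "(of_real u - 1) * 0 + (p + of_real u) \<noteq> 0" by (rule fwd_ineq(1)[OF pgt u01]) simp
    then have qv0: "q + of_real v \<noteq> 0" unfolding p_def Ue by (simp add: algebra_simps)
    show ?thesis
    proof
      fix s assume "s \<in> disc \<rho>"
      then have sr: "cmod s \<le> 1/cmod p" unfolding disc_def rho by simp
      have S1: "cmod (p*s) \<le> 1" using sr p0 by (simp add: norm_mult field_simps)
      have "1 + (q-1)*t*s \<noteq> 0 \<and> cmod (par q t s) \<le> 1 / cmod (q-1)"
        using par_bound[OF qv0 t Ue] fwd_ineq[OF pgt u01 S1] p0 unfolding p_def by simp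
      then show "1 + (q - 1) * t * s \<noteq> 0 \<and> par q t s \<in> disc \<rho>"
        unfolding disc_def rho p_def by simp
    qed
  qed
  have conv: "t \<in> Cq q" if H: "\<forall>s\<in>disc \<rho>. 1 + (q - 1) * t * s \<noteq> 0 \<and> par q t s \<in> disc \<rho>" for t
  proof -
    have "-1/p \<in> disc \<rho>" unfolding disc_def rho by (simp add: norm_divide)
    then have "1 + p * t * (-1/p) \<noteq> 0" using H unfolding p_def by auto
    then have t1: "1 - t \<noteq> 0" using p0 by (simp add: field_simps)
    define v where "v = q*t/(1-t)"
    define U where "U = v + 1"
    have qv: "q + v = q/(1-t)" unfolding v_def using t1 by (simp add: field_simps)
    have qv0: "q + v \<noteq> 0" unfolding qv using q0 t1 by simp
    have tv: "t = v/(q+v)" unfolding qv unfolding v_def using t1 q0 by (simp add: field_simps)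
    have HH: "cmod ((1 + p * U) * S + p * (U - 1)) \<le> cmod ((U - 1) * S + (p + U))" if S: "cmod S \<le> 1" for S
    proof -
      define s where "s = S / p"
      have Ss: "S = (q-1)*s" unfolding s_def p_def using p0 unfolding p_def by simp
      have "s \<in> disc \<rho>" unfolding disc_def rho s_def using S p0 by (simp add: norm_divide divide_right_mono)
      then have "1 + (q - 1) * t * s \<noteq> 0" "cmod (par q t s) \<le> 1 / cmod (q-1)"
        using H unfolding disc_def rho p_def by auto
      from par_bound_conv[OF qv0 tv U_def _ this] p0
      show ?thesis unfolding Ss p_def by simp
    qed
    have "Im U = 0 \<and> 0 \<le> Re U \<and> Re U \<le> 1" by (rule conv_ineq[OF pgt HH])
    then have "v = of_real (Re U - 1)" "-1 \<le> Re U - 1" "Re U - 1 \<le> 0"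
      unfolding U_def by (auto simp: complex_eq_iff)
    then have "t = complex_of_real (Re U - 1) / (q + complex_of_real (Re U - 1)) \<and> Re U - 1 \<in> {-1..0}"
      using tv by simp
    then show ?thesis unfolding Cq_def by blast
  qed
  have part1: "\<forall>t. (\<forall>s\<in>disc \<rho>. 1 + (q - 1) * t * s \<noteq> 0 \<and> par q t s \<in> disc \<rho>) \<longleftrightarrow> t \<in> Cq q"
    using fwd conv by blast
  show ?thesis
  proof (intro conjI)
    show "\<forall>t. (\<forall>s\<in>disc \<rho>. 1 + (q - 1) * t * s \<noteq> 0 \<and> par q t s \<in> disc \<rho>) \<longleftrightarrow> t \<in> Cq q"
      by (rule part1)
    show "{par q t s | t s. t \<in> Cq q \<and> s \<in> disc \<rho>} \<subseteq> disc \<rho>"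
      using fwd by blast
    show "\<forall>S. (\<forall>t\<in>S. \<forall>s\<in>disc \<rho>. 1 + (q - 1) * t * s \<noteq> 0 \<and> par q t s \<in> disc \<rho>) \<longrightarrow> S \<subseteq> Cq q"
      using conv by blast
  qed
qed

end
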